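(* Let $a,b,c$ be positive integers with $c\geq b\geq a$, and suppose that at least one of the following holds: (1) $c=ka+lb$ for some integers $k,l\geq 0$; (2) $a$ divides $b$; (3) $a\leq 2$. Then there exists a tame polynomial automorphism $F$ of $\mathbb{C}^3$ with $\operatorname{mdeg} F=(a,b,c)$.
   Context: For a polynomial automorphism $F=(F_1,\ldots,F_n)$ of $\mathbb{C}^n$, its multidegree is $\operatorname{mdeg}F:=(\deg F_1,\ldots,\deg F_n)$, where $\deg$ is total degree. A map $F=(F_1,\ldots,F_n)$ is elementary if for some $j\leq n$ and some polynomial $g$ in $n-1$ variables, $F_j=X_j+g(X_1,\ldots,\widehat{X_j},\ldots,X_n)$ and $F_i=X_i$ for $i\neq j$. A polynomial automorphism is tame if it is a composition of invertible affine-linear maps and elementary maps. *)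

theory Defs
  imports Complex_Main "HOL-Library.Poly_Mapping"
begin

text \<open>Multivariate polynomials over the complex numbers: finitely supported maps from
  exponent vectors (nat \<Rightarrow>0 nat; variable X_i has index i) to coefficients.
  Polynomials in C[X_0,X_1,X_2] are those whose monomials only involve indices 0,1,2.\<close>

type_synonym mpoly = "(nat \<Rightarrow>\<^sub>0 nat) \<Rightarrow>\<^sub>0 complex"

definition Var :: "nat \<Rightarrow> mpoly" where
  "Var i = Poly_Mapping.single (Poly_Mapping.single i 1) 1"

definition Const :: "complex \<Rightarrow> mpoly" where
  "Const c = Poly_Mapping.single 0 c"

definition vars :: "mpoly \<Rightarrow> nat set" where
  "vars p = (\<Union>m\<in>Poly_Mapping.keys p. Poly_Mapping.keys m)"

text \<open>total degree of a monomial and of a polynomial (deg 0 = 0 by convention;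
  never relevant here since components of automorphisms are nonzero)\<close>
definition mon_deg :: "(nat \<Rightarrow>\<^sub>0 nat) \<Rightarrow> nat" where
  "mon_deg m = (\<Sum>i\<in>Poly_Mapping.keys m. Poly_Mapping.lookup m i)"

definition tdeg :: "mpoly \<Rightarrow> nat" where
  "tdeg p = Max (insert 0 (mon_deg ` Poly_Mapping.keys p))"

definition subst :: "(nat \<Rightarrow> mpoly) \<Rightarrow> mpoly \<Rightarrow> mpoly" where
  "subst G p = (\<Sum>m\<in>Poly_Mapping.keys p. Const (Poly_Mapping.lookup p m) * (\<Prod>i\<in>Poly_Mapping.keys m. G i ^ Poly_Mapping.lookup m i))"

text \<open>Polynomial maps of C^3 are represented as F :: nat \<Rightarrow> mpoly with components F 0, F 1, F 2
  in C[X_0,X_1,X_2]; components of index \<ge> 3 are normalised to the identity X_i.\<close>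
type_synonym pmap = "nat \<Rightarrow> mpoly"

definition pcomp :: "pmap \<Rightarrow> pmap \<Rightarrow> pmap" where
  "pcomp F G = (\<lambda>i. subst G (F i))"

definition affine_invertible :: "pmap \<Rightarrow> bool" where
  "affine_invertible F \<longleftrightarrow>
     (\<exists>(A :: nat \<Rightarrow> nat \<Rightarrow> complex) (b :: nat \<Rightarrow> complex).
        (\<exists>B :: nat \<Rightarrow> nat \<Rightarrow> complex. \<forall>i<3. \<forall>k<3.
            (\<Sum>j<3. A i j * B j k) = (if i = k then 1 else 0)) \<and>
        (\<forall>i<3. F i = (\<Sum>j<3. Const (A i j) * Var j) + Const (b i)) \<and>
        (\<forall>i\<ge>3. F i = Var i))"

definition elementary :: "pmap \<Rightarrow> bool" where
  "elementary F \<longleftrightarrow>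
     (\<exists>j<3. \<exists>g :: mpoly. vars g \<subseteq> {0,1,2} - {j} \<and>
        F j = Var j + g \<and> (\<forall>i. i \<noteq> j \<longrightarrow> F i = Var i))"

inductive tame :: "pmap \<Rightarrow> bool" where
  tame_affine: "affine_invertible F \<Longrightarrow> tame F"
| tame_elementary: "elementary F \<Longrightarrow> tame F"
| tame_comp: "tame F \<Longrightarrow> tame G \<Longrightarrow> tame (pcomp F G)"

definition mdeg :: "pmap \<Rightarrow> nat \<times> nat \<times> nat" where
  "mdeg F = (tdeg (F 0), tdeg (F 1), tdeg (F 2))"

end

theory Submission imports Defs "HOL-Computational_Algebra.Polynomial" begin

lemma pm_expand: "p = (\<Sum>a\<in>Poly_Mapping.keys p. Poly_Mapping.single a (Poly_Mapping.lookup p a))"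
  for p :: "'a \<Rightarrow>\<^sub>0 'b::comm_monoid_add"
  by (rule poly_mapping_eqI) (auto simp add: lookup_sum lookup_single in_keys_iff when_def sum.delta sum.delta')

definition mono :: "pmap \<Rightarrow> (nat \<Rightarrow>\<^sub>0 nat) \<Rightarrow> mpoly" where
  "mono G m = (\<Prod>i\<in>Poly_Mapping.keys m. G i ^ Poly_Mapping.lookup m i)"

lemma mono_superset: "finite S \<Longrightarrow> Poly_Mapping.keys m \<subseteq> S \<Longrightarrow>
   mono G m = (\<Prod>i\<in>S. G i ^ Poly_Mapping.lookup m i)"
  unfolding mono_def by (rule prod.mono_neutral_left) (auto simp: in_keys_iff)

lemma subst_superset: "finite S \<Longrightarrow> Poly_Mapping.keys p \<subseteq> S \<Longrightarrow>
   subst G p = (\<Sum>m\<in>S. Const (Poly_Mapping.lookup p m) * mono G m)"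
  unfolding subst_def mono_def[symmetric] by (rule sum.mono_neutral_left) (auto simp: in_keys_iff Const_def)

lemma subst_add: "subst G (p + q) = subst G p + subst G q"
proof -
  let ?S = "Poly_Mapping.keys p \<union> Poly_Mapping.keys q"
  have "subst G (p + q) = (\<Sum>m\<in>?S. Const (Poly_Mapping.lookup (p+q) m) * mono G m)"
    using keys_add[of p q] by (intro subst_superset) auto
  also have "\<dots> = (\<Sum>m\<in>?S. Const (Poly_Mapping.lookup p m) * mono G m) + (\<Sum>m\<in>?S. Const (Poly_Mapping.lookup q m) * mono G m)"
    by (simp add: lookup_add Const_def single_add distrib_right sum.distrib)
  also have "\<dots> = subst G p + subst G q"
    using subst_superset[of ?S p G] subst_superset[of ?S q G] by simp
  finally show ?thesis .
qed

lemma subst_single: "subst G (Poly_Mapping.single m c) = Const c * mono G m"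
  by (subst subst_superset[of "{m}"]) auto

lemma Const_1: "Const 1 = 1" by (simp add: Const_def)

lemma mono_single: "mono G (Poly_Mapping.single i n) = G i ^ n"
  by (subst mono_superset[of "{i}"]) auto

lemma keys_two: "Poly_Mapping.keys (Poly_Mapping.single (0::nat) k + Poly_Mapping.single 1 (l::nat)) \<subseteq> {0,1}"
  by (rule order_trans[OF keys_add]) auto

lemma mono_two: "mono G (Poly_Mapping.single 0 k + Poly_Mapping.single 1 l) = G 0 ^ k * G 1 ^ l"
  by (subst mono_superset[of "{0,1}"]) (use keys_two in \<open>auto simp: lookup_add lookup_single\<close>)

lemma Var_pow: "Var i ^ n = Poly_Mapping.single (Poly_Mapping.single i n) 1"
proof (induction n)
  case 0 then show ?case by simp
next
  case (Suc n) then show ?case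
    by (simp add: Var_def mult_single single_add[symmetric])
qed

lemma subst_Var: "subst G (Var i) = G i"
  using mono_single[of G i 1] by (simp add: Var_def subst_single Const_1)

lemma mon_deg_superset: "finite S \<Longrightarrow> Poly_Mapping.keys m \<subseteq> S \<Longrightarrow>
   mon_deg m = (\<Sum>i\<in>S. Poly_Mapping.lookup m i)"
  unfolding mon_deg_def by (rule sum.mono_neutral_left) (auto simp: in_keys_iff)

lemma mon_deg_add: "mon_deg (m1 + m2) = mon_deg m1 + mon_deg m2"
proof -
  let ?S = "Poly_Mapping.keys m1 \<union> Poly_Mapping.keys m2"
  have "mon_deg (m1 + m2) = (\<Sum>i\<in>?S. Poly_Mapping.lookup (m1+m2) i)"
    using keys_add[of m1 m2] by (intro mon_deg_superset) auto
  then show ?thesis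
    using mon_deg_superset[of ?S m1] mon_deg_superset[of ?S m2] by (simp add: lookup_add sum.distrib)
qed

lemma mon_deg_single: "mon_deg (Poly_Mapping.single i n) = n"
  by (subst mon_deg_superset[of "{i}"]) auto

definition phi :: "mpoly \<Rightarrow> complex poly" where
  "phi p = (\<Sum>m\<in>Poly_Mapping.keys p. monom (Poly_Mapping.lookup p m) (mon_deg m))"

lemma phi_superset: "finite S \<Longrightarrow> Poly_Mapping.keys p \<subseteq> S \<Longrightarrow>
   phi p = (\<Sum>m\<in>S. monom (Poly_Mapping.lookup p m) (mon_deg m))"
  unfolding phi_def by (rule sum.mono_neutral_left) (auto simp: in_keys_iff)

lemma phi_add: "phi (p + q) = phi p + phi q"
proof -
  let ?S = "Poly_Mapping.keys p \<union> Poly_Mapping.keys q"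
  have "phi (p + q) = (\<Sum>m\<in>?S. monom (Poly_Mapping.lookup (p+q) m) (mon_deg m))"
    using keys_add[of p q] by (intro phi_superset) auto
  then show ?thesis
    using phi_superset[of ?S p] phi_superset[of ?S q] by (simp add: lookup_add add_monom[symmetric] sum.distrib)
qed

lemma phi_zero: "phi 0 = 0" by (simp add: phi_def)

lemma phi_sum: "phi (\<Sum>x\<in>A. f x) = (\<Sum>x\<in>A. phi (f x))"
  by (induction A rule: infinite_finite_induct) (auto simp: phi_zero phi_add)

lemma phi_single: "phi (Poly_Mapping.single m c) = monom c (mon_deg m)"
  by (subst phi_superset[of "{m}"]) auto

lemma phi_mult: "phi (p * q) = phi p * phi q"
proof -
  have "p * q = (\<Sum>a\<in>Poly_Mapping.keys p. Poly_Mapping.single a (Poly_Mapping.lookup p a)) *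
     (\<Sum>b\<in>Poly_Mapping.keys q. Poly_Mapping.single b (Poly_Mapping.lookup q b))"
    by (simp only: pm_expand[symmetric])
  also have "\<dots> = (\<Sum>a\<in>Poly_Mapping.keys p. \<Sum>b\<in>Poly_Mapping.keys q.
      Poly_Mapping.single (a + b) (Poly_Mapping.lookup p a * Poly_Mapping.lookup q b))"
    by (simp add: sum_product mult_single)
  finally have "phi (p * q) = (\<Sum>a\<in>Poly_Mapping.keys p. \<Sum>b\<in>Poly_Mapping.keys q.
      monom (Poly_Mapping.lookup p a) (mon_deg a) * monom (Poly_Mapping.lookup q b) (mon_deg b))"
    by (simp add: phi_sum phi_single mon_deg_add mult_monom)
  then show ?thesis by (simp add: phi_def sum_product)
qed

lemma phi_one: "phi 1 = 1"
  using phi_single[of 0 1] by (simp add: mon_deg_def)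

definition nn :: "mpoly \<Rightarrow> bool" where
  "nn p \<longleftrightarrow> (\<forall>m. Im (Poly_Mapping.lookup p m) = 0 \<and> 0 \<le> Re (Poly_Mapping.lookup p m))"

lemma nn_add: "nn p \<Longrightarrow> nn q \<Longrightarrow> nn (p + q)"
  by (simp add: nn_def lookup_add)

lemma nn_zero: "nn 0" by (simp add: nn_def)

lemma nn_sum: "(\<And>x. x \<in> A \<Longrightarrow> nn (f x)) \<Longrightarrow> nn (\<Sum>x\<in>A. f x)"
  by (induction A rule: infinite_finite_induct) (auto simp: nn_zero nn_add)

lemma nn_single: "Im c = 0 \<Longrightarrow> 0 \<le> Re c \<Longrightarrow> nn (Poly_Mapping.single m c)"
  by (simp add: nn_def lookup_single when_def)

lemma nn_mult: "nn p \<Longrightarrow> nn q \<Longrightarrow> nn (p * q)"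
proof -
  assume p: "nn p" and q: "nn q"
  have "p * q = (\<Sum>a\<in>Poly_Mapping.keys p. Poly_Mapping.single a (Poly_Mapping.lookup p a)) *
     (\<Sum>b\<in>Poly_Mapping.keys q. Poly_Mapping.single b (Poly_Mapping.lookup q b))"
    by (simp only: pm_expand[symmetric])
  also have "\<dots> = (\<Sum>a\<in>Poly_Mapping.keys p. \<Sum>b\<in>Poly_Mapping.keys q.
      Poly_Mapping.single (a + b) (Poly_Mapping.lookup p a * Poly_Mapping.lookup q b))"
    by (simp add: sum_product mult_single)
  moreover have "nn (\<Sum>a\<in>Poly_Mapping.keys p. \<Sum>b\<in>Poly_Mapping.keys q.
      Poly_Mapping.single (a + b) (Poly_Mapping.lookup p a * Poly_Mapping.lookup q b))"
    using p q by (intro nn_sum nn_single) (auto simp: nn_def)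
  ultimately show ?thesis by simp
qed

lemma nn_one: "nn 1" using nn_single[of 1 0] by simp

lemma nn_pow: "nn p \<Longrightarrow> nn (p ^ n)"
  by (induction n) (auto simp: nn_one nn_mult)

lemma nn_Var: "nn (Var i)" by (simp add: Var_def nn_single)

lemma tdeg_keys: "p \<noteq> 0 \<Longrightarrow> \<exists>m\<in>Poly_Mapping.keys p. mon_deg m = tdeg p"
proof -
  assume "p \<noteq> 0"
  then have ne: "Poly_Mapping.keys p \<noteq> {}" by simp
  have "tdeg p \<in> insert 0 (mon_deg ` Poly_Mapping.keys p)"
    unfolding tdeg_def by (rule Max_in) auto
  moreover have "tdeg p \<ge> mon_deg m" if "m \<in> Poly_Mapping.keys p" for m
    unfolding tdeg_def using that by (intro Max_ge) auto
  ultimately show ?thesis using ne by fastforce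
qed

lemma tdeg_ge: "m \<in> Poly_Mapping.keys p \<Longrightarrow> mon_deg m \<le> tdeg p"
  unfolding tdeg_def by (intro Max_ge) auto

lemma coeff_phi: "coeff (phi p) n = (\<Sum>m\<in>Poly_Mapping.keys p. if mon_deg m = n then Poly_Mapping.lookup p m else 0)"
  by (simp add: phi_def coeff_sum)

lemma phi_tdeg:
  assumes "nn p" "p \<noteq> 0"
  shows "coeff (phi p) (tdeg p) \<noteq> 0" "degree (phi p) = tdeg p"
proof -
  obtain m0 where m0: "m0 \<in> Poly_Mapping.keys p" "mon_deg m0 = tdeg p"
    using tdeg_keys assms(2) by blast
  let ?f = "\<lambda>m. if mon_deg m = tdeg p then Poly_Mapping.lookup p m else 0"
  have "Re (?f m0) \<le> (\<Sum>m\<in>Poly_Mapping.keys p. Re (?f m))"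
    using assms(1) m0 by (intro member_le_sum) (auto simp: nn_def)
  moreover have "Re (?f m0) > 0"
  proof -
    have "Poly_Mapping.lookup p m0 \<noteq> 0" using m0 by (simp add: in_keys_iff)
    moreover have "Im (Poly_Mapping.lookup p m0) = 0" "Re (Poly_Mapping.lookup p m0) \<ge> 0"
      using assms(1) by (auto simp: nn_def)
    ultimately show ?thesis using m0 complex_eqI[of "Poly_Mapping.lookup p m0" 0] by force
  qed
  ultimately have "Re (coeff (phi p) (tdeg p)) > 0"
    by (simp add: coeff_phi Re_sum)
  then show c: "coeff (phi p) (tdeg p) \<noteq> 0" by auto
  have "degree (phi p) \<le> tdeg p"
    by (rule degree_le) (auto simp: coeff_phi intro!: sum.neutral dest: tdeg_ge)
  then show "degree (phi p) = tdeg p" using le_degree[OF c] by simp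
qed

lemma phi_nz: "nn p \<Longrightarrow> p \<noteq> 0 \<Longrightarrow> phi p \<noteq> 0"
  using phi_tdeg(1) by force

lemma tdeg_mult: "nn p \<Longrightarrow> nn q \<Longrightarrow> p \<noteq> 0 \<Longrightarrow> q \<noteq> 0 \<Longrightarrow> tdeg (p * q) = tdeg p + tdeg q"
proof -
  assume a: "nn p" "nn q" "p \<noteq> 0" "q \<noteq> 0"
  have "p * q \<noteq> 0" using a by simp
  then have "tdeg (p * q) = degree (phi (p * q))" using phi_tdeg(2)[of "p*q"] a nn_mult by simp
  also have "\<dots> = degree (phi p) + degree (phi q)"
    using a by (simp add: phi_mult degree_mult_eq phi_nz)
  finally show ?thesis using a phi_tdeg(2) by simp
qed

lemma nz_pow: "(p::mpoly) \<noteq> 0 \<Longrightarrow> p ^ n \<noteq> 0" by simp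

lemma tdeg_pow: "nn p \<Longrightarrow> p \<noteq> 0 \<Longrightarrow> tdeg (p ^ n) = n * tdeg p"
proof (induction n)
  case 0 then show ?case by (simp add: tdeg_def mon_deg_def)
next
  case (Suc n) then show ?case by (simp add: tdeg_mult nn_pow)
qed

lemma cplx_nn_add: "Im x = 0 \<Longrightarrow> Im y = 0 \<Longrightarrow> 0 \<le> Re x \<Longrightarrow> 0 \<le> Re y \<Longrightarrow> x + y = 0 \<longleftrightarrow> x = 0 \<and> y = 0"
  by (simp add: complex_eq_iff, linarith)

lemma keys_add_nn: "nn p \<Longrightarrow> nn q \<Longrightarrow> Poly_Mapping.keys (p + q) = Poly_Mapping.keys p \<union> Poly_Mapping.keys q"
proof -
  assume a: "nn p" "nn q"
  have eq: "Poly_Mapping.lookup (p + q) m = 0 \<longleftrightarrow> Poly_Mapping.lookup p m = 0 \<and> Poly_Mapping.lookup q m = 0" for m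
  proof -
    have "Im (Poly_Mapping.lookup p m) = 0" "Im (Poly_Mapping.lookup q m) = 0"
      "Re (Poly_Mapping.lookup p m) \<ge> 0" "Re (Poly_Mapping.lookup q m) \<ge> 0"
      using a by (auto simp: nn_def)
    then show ?thesis unfolding lookup_add by (rule cplx_nn_add)
  qed
  show ?thesis
  proof (rule set_eqI)
    fix m show "m \<in> Poly_Mapping.keys (p + q) \<longleftrightarrow> m \<in> Poly_Mapping.keys p \<union> Poly_Mapping.keys q"
      using eq[of m] by (simp add: in_keys_iff)
  qed
qed

lemma tdeg_add: "nn p \<Longrightarrow> nn q \<Longrightarrow> tdeg (p + q) = max (tdeg p) (tdeg q)"
proof -
  assume a: "nn p" "nn q"
  have "insert 0 (mon_deg ` Poly_Mapping.keys (p + q)) =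
     insert 0 (mon_deg ` Poly_Mapping.keys p) \<union> insert 0 (mon_deg ` Poly_Mapping.keys q)"
    using keys_add_nn[OF a] by auto
  then have "tdeg (p + q) = Max (insert 0 (mon_deg ` Poly_Mapping.keys p) \<union> insert 0 (mon_deg ` Poly_Mapping.keys q))"
    unfolding tdeg_def by simp
  also have "\<dots> = max (tdeg p) (tdeg q)" unfolding tdeg_def by (rule Max_Un) auto
  finally show ?thesis .
qed

lemma tdeg_single: "c \<noteq> 0 \<Longrightarrow> tdeg (Poly_Mapping.single m c) = mon_deg m"
  by (simp add: tdeg_def)

lemma tdeg_Var_pow: "tdeg (Var i ^ n) = n"
  by (simp add: Var_pow tdeg_single mon_deg_single)

lemma tdeg_Var: "tdeg (Var i) = 1"
  using tdeg_Var_pow[of i 1] by simp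

lemma Var_nz: "Var i \<noteq> 0" by (metis Var_def lookup_single_eq lookup_zero one_neq_zero)


lemma tdeg_zero: "tdeg 0 = 0" by (simp add: tdeg_def)

lemma tdeg_pos_nz: "0 < tdeg p \<Longrightarrow> p \<noteq> 0" using tdeg_zero by auto

definition elem :: "nat \<Rightarrow> (nat \<Rightarrow>\<^sub>0 nat) \<Rightarrow> pmap" where
  "elem j m = (\<lambda>i. if i = j then Var j + Poly_Mapping.single m 1 else Var i)"

lemma elementary_elem: "j < 3 \<Longrightarrow> Poly_Mapping.keys m \<subseteq> {0,1,2} - {j} \<Longrightarrow> elementary (elem j m)"
  unfolding elementary_def
  by (rule exI[of _ j], simp, rule exI[of _ "Poly_Mapping.single m 1"]) (auto simp: vars_def elem_def)

lemma pcomp_elem: "pcomp (elem j m) G i = (if i = j then G j + mono G m else G i)"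
  by (simp add: pcomp_def elem_def subst_add subst_Var subst_single Const_1)

lemma case1:
  assumes "0 < a" "0 < b" "c = k*a + l*b" "0 < c"
  shows "\<exists>F. tame F \<and> mdeg F = (a,b,c)"
proof -
  define E2 where "E2 = elem 1 (Poly_Mapping.single 2 b)"
  define G where "G = pcomp (elem 0 (Poly_Mapping.single 2 a)) E2"
  define F where "F = pcomp (elem 2 (Poly_Mapping.single 0 k + Poly_Mapping.single 1 l)) G"
  have tE2: "tame E2" unfolding E2_def by (intro tame_elementary elementary_elem) auto
  have tG: "tame G" unfolding G_def by (intro tame_comp tame_elementary elementary_elem tE2) auto
  have tF: "tame F" unfolding F_def using keys_two[of k l]
    by (intro tame_comp tame_elementary elementary_elem tG) auto
  have G0: "G 0 = Var 0 + Var 2 ^ a" unfolding G_def pcomp_elem mono_single by (simp add: E2_def elem_def)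
  have G1: "G 1 = Var 1 + Var 2 ^ b" unfolding G_def pcomp_elem by (simp add: E2_def elem_def Var_pow)
  have G2: "G 2 = Var 2" unfolding G_def pcomp_elem by (simp add: E2_def elem_def)
  have F0: "F 0 = G 0" and F1: "F 1 = G 1"
    by (simp_all add: F_def pcomp_elem)
  have F2: "F 2 = G 2 + G 0 ^ k * G 1 ^ l"
    unfolding F_def pcomp_elem mono_two by simp
  have n0: "nn (G 0)" "nn (G 1)" unfolding G0 G1 by (intro nn_add nn_pow nn_Var)+
  have d0: "tdeg (G 0) = a" unfolding G0 using assms
    by (simp add: tdeg_add nn_Var nn_pow tdeg_Var tdeg_Var_pow)
  have d1: "tdeg (G 1) = b" unfolding G1 using assms
    by (simp add: tdeg_add nn_Var nn_pow tdeg_Var tdeg_Var_pow)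
  have z: "G 0 \<noteq> 0" "G 1 \<noteq> 0" using d0 d1 assms tdeg_pos_nz by auto
  have dP: "tdeg (G 0 ^ k * G 1 ^ l) = c"
    using n0 z d0 d1 assms by (simp add: tdeg_mult tdeg_pow nn_pow)
  have c1: "Suc 0 \<le> k * a + l * b" using assms(3,4) by linarith
  have d2: "tdeg (F 2) = c" unfolding F2 G2 using dP n0 assms c1
    by (simp add: tdeg_add nn_Var nn_pow nn_mult tdeg_Var)
  show ?thesis using tF d0 d1 d2 F0 F1 by (intro exI[of _ F]) (simp add: mdeg_def)
qed

lemma case2:
  assumes "0 < a" "b = m*a" "0 < b" "0 < c"
  shows "\<exists>F. tame F \<and> mdeg F = (a,b,c)"
proof -
  define E where "E = elem 2 (Poly_Mapping.single 1 c)"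
  define A where "A = pcomp (elem 0 (Poly_Mapping.single 1 a)) E"
  define F where "F = pcomp (elem 1 (Poly_Mapping.single 0 m)) A"
  have tE: "tame E" unfolding E_def by (intro tame_elementary elementary_elem) auto
  have tA: "tame A" unfolding A_def by (intro tame_comp tame_elementary elementary_elem tE) auto
  have tF: "tame F" unfolding F_def by (intro tame_comp tame_elementary elementary_elem tA) auto
  have A0: "A 0 = Var 0 + Var 1 ^ a" unfolding A_def pcomp_elem mono_single by (simp add: E_def elem_def)
  have A1: "A 1 = Var 1" unfolding A_def pcomp_elem by (simp add: E_def elem_def)
  have A2: "A 2 = Var 2 + Var 1 ^ c" unfolding A_def pcomp_elem by (simp add: E_def elem_def Var_pow)
  have F0: "F 0 = A 0" and F1: "F 1 = A 1 + A 0 ^ m" and F2: "F 2 = A 2"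
    by (simp_all add: F_def pcomp_elem mono_single)
  have n0: "nn (A 0)" unfolding A0 by (intro nn_add nn_pow nn_Var)+
  have d0: "tdeg (A 0) = a" unfolding A0 using assms
    by (simp add: tdeg_add nn_Var nn_pow tdeg_Var tdeg_Var_pow)
  have z: "A 0 \<noteq> 0" using d0 assms tdeg_pos_nz by auto
  have d1: "tdeg (F 1) = b" unfolding F1 A1 using assms n0 z d0
    by (simp add: tdeg_add nn_Var nn_pow tdeg_Var tdeg_pow)
  have d2: "tdeg (F 2) = c" unfolding F2 A2 using assms
    by (simp add: tdeg_add nn_Var nn_pow tdeg_Var tdeg_Var_pow)
  show ?thesis using tF d0 d1 d2 F0 by (intro exI[of _ F]) (simp add: mdeg_def)
qed


theorem fact1:
  fixes a b c :: nat
  assumes "0 < a" and "a \<le> b" and "b \<le> c"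
    and "(\<exists>k l :: nat. c = k * a + l * b) \<or> a dvd b \<or> a \<le> 2"
  shows "\<exists>F. tame F \<and> mdeg F = (a, b, c)"
proof -
  have pos: "0 < b" "0 < c" using assms by auto
  have C1: ?thesis if "c = k * a + l * b" for k l using case1[OF assms(1) pos(1) that pos(2)] .
  have C2: ?thesis if ab: "a dvd b"
  proof -
    obtain m where "b = a * m" using ab unfolding dvd_def by blast
    then have "b = m * a" by (simp add: mult.commute)
    then show ?thesis using case2[OF assms(1) _ pos] by blast
  qed
  show ?thesis
  proof (cases "(\<exists>k l :: nat. c = k * a + l * b) \<or> a dvd b")
    case True then show ?thesis using C1 C2 by blast
  next
    case False
    then have a2: "a \<le> 2" using assms(4) by blast
    show ?thesis
    proof (cases "a = 1")
      case True then show ?thesis using C2 by simp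
    next
      case False
      then have a: "a = 2" using a2 assms(1) by simp
      show ?thesis
      proof (cases "even b")
        case True then show ?thesis using C2 a by simp
      next
        case ob: False
        show ?thesis
        proof (cases "even c")
          case True
          then have "c = (c div 2) * a + 0 * b" using a by simp
          then show ?thesis by (rule C1)
        next
          case False
          then have "even (c - b)" using ob assms(3) by simp
          then have "c = ((c - b) div 2) * a + 1 * b" using a assms(3) by simp
          then show ?thesis by (rule C1)
        qed
      qed
    qed
  qed
qed

end
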